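(* Let $S$ be a sampling of $[n]$ which is non-vacuous, has $c_1$-uniform support with $c_1\ge1$, and is $\tau$-uniform. Then $\frac{|\mathrm{supp}(S)|}{c_1}=\frac n\tau$. Consequently, for $\mathbf W=\mathrm{diag}(w_1,\dots,w_n)\succ0$ and the minibatch sketch $\mathbf S=\mathbf I_S$, the stochastic condition number satisfies $\kappa=p_1=\dots=p_n=\frac\tau n=\frac{c_1}{|\mathrm{supp}(S)|}$.
   Context: $p_C=\Pr(S=C)$, $p_i=\Pr(i\in S)$, $\mathrm{supp}(S)=\{C:p_C>0\}$; non-vacuous: $p_\emptyset=0$; $c_1$-uniform support: $|\{C\in\mathrm{supp}(S):i\in C\}|=c_1$ for all $i$; $\tau$-uniform: $p_i=p_j$ for all $i,j$ and $|S|=\tau$ a.s. $\mathbf I_S$ is the column submatrix of the identity with columns in $S$; $\Pi_{\mathbf S}=\mathbf S(\mathbf S^\top\mathbf W\mathbf S)^\dagger\mathbf S^\top\mathbf W$; $\kappa=\lambda_{\min}(\mathbb{E}[\Pi_{\mathbf S}])$. *)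

theory Defs
  imports "HOL-Probability.Probability_Mass_Function" "Jordan_Normal_Form.Char_Poly"
begin

text \<open>A sampling of [n] is a random subset; we index [n] as {0..<n} (JNF convention).
  It is represented as a pmf on subsets.\<close>

definition is_sampling :: "nat \<Rightarrow> nat set pmf \<Rightarrow> bool" where
  "is_sampling n S \<longleftrightarrow> set_pmf S \<subseteq> Pow {..<n}"

definition incl_prob :: "nat set pmf \<Rightarrow> nat \<Rightarrow> real" where
  "incl_prob S i = measure_pmf.prob S {C. i \<in> C}"

definition non_vacuous :: "nat set pmf \<Rightarrow> bool" where
  "non_vacuous S \<longleftrightarrow> pmf S {} = 0"

definition uniform_support :: "nat \<Rightarrow> nat \<Rightarrow> nat set pmf \<Rightarrow> bool" where
  "uniform_support n c1 S \<longleftrightarrow> (\<forall>i<n. card {C \<in> set_pmf S. i \<in> C} = c1)"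

definition tau_uniform :: "nat \<Rightarrow> nat \<Rightarrow> nat set pmf \<Rightarrow> bool" where
  "tau_uniform n \<tau> S \<longleftrightarrow> (\<forall>i<n. \<forall>j<n. incl_prob S i = incl_prob S j)
     \<and> (AE C in measure_pmf S. card C = \<tau>)"

text \<open>Column submatrix of the n x n identity with columns in C (in increasing order).\<close>
definition I_sub :: "nat \<Rightarrow> nat set \<Rightarrow> real mat" where
  "I_sub n C = mat n (card C) (\<lambda>(i, j). if i = sorted_list_of_set C ! j then 1 else 0)"

definition pinv :: "real mat \<Rightarrow> real mat" where
  "pinv A = (THE X. X \<in> carrier_mat (dim_col A) (dim_row A) \<and> A * X * A = A \<and> X * A * X = X
      \<and> transpose_mat (A * X) = A * X \<and> transpose_mat (X * A) = X * A)"

definition diag_real_mat :: "nat \<Rightarrow> (nat \<Rightarrow> real) \<Rightarrow> real mat" where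
  "diag_real_mat n w = mat n n (\<lambda>(i, j). if i = j then w i else 0)"

definition proj_sketch :: "real mat \<Rightarrow> real mat \<Rightarrow> real mat" where
  "proj_sketch W Sk = Sk * pinv (transpose_mat Sk * W * Sk) * transpose_mat Sk * W"

definition expect_mat :: "nat \<Rightarrow> nat set pmf \<Rightarrow> (nat set \<Rightarrow> real mat) \<Rightarrow> real mat" where
  "expect_mat n S M = mat n n (\<lambda>(i, j). \<Sum>C\<in>set_pmf S. pmf S C * (M C $$ (i, j)))"

definition lambda_min :: "real mat \<Rightarrow> real" where
  "lambda_min A = Min {k. eigenvalue A k}"

definition stoch_cond_number :: "nat \<Rightarrow> real mat \<Rightarrow> nat set pmf \<Rightarrow> real" where
  "stoch_cond_number n W S = lambda_min (expect_mat n S (\<lambda>C. proj_sketch W (I_sub n C)))"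

end

theory Submission
  imports Defs
begin

lemma incl_prob_sum:
  assumes "finite (set_pmf S)"
  shows "incl_prob S i = (\<Sum>C\<in>set_pmf S. if i \<in> C then pmf S C else 0)"
proof -
  have "measure_pmf.prob S {C. i \<in> C} = measure_pmf.prob S ({C. i \<in> C} \<inter> set_pmf S)"
    by (intro measure_pmf.finite_measure_eq_AE) (auto simp: AE_measure_pmf_iff)
  also have "\<dots> = sum (pmf S) ({C. i \<in> C} \<inter> set_pmf S)"
    using assms by (simp add: measure_measure_pmf_finite)
  also have "\<dots> = (\<Sum>C\<in>set_pmf S. if i \<in> C then pmf S C else 0)"
    using assms by (simp add: sum.inter_restrict Int_commute)
  finally show ?thesis by (simp add: incl_prob_def)
qed

lemma sorted_facts:
  assumes "finite C"
  defines "l \<equiv> sorted_list_of_set C"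
  shows "distinct l" "length l = card C" "set l = C"
  using assms by auto

lemma sum_nth_eq:
  assumes "finite C"
  shows "(\<Sum>b<card C. f (sorted_list_of_set C ! b)) = (\<Sum>c\<in>C. f c)"
proof -
  let ?l = "sorted_list_of_set C"
  have inj: "inj_on ((!) ?l) {..<card C}"
    using assms by (intro inj_on_nth) auto
  have im: "(!) ?l ` {..<card C} = C"
    using assms by (metis atLeast0LessThan distinct_sorted_list_of_set length_sorted_list_of_set set_sorted_list_of_set set_upt map_nth set_map)
  show ?thesis using sum.reindex[OF inj, of f] im by simp
qed

lemma mult_entry:
  assumes "A \<in> carrier_mat nr k" "B \<in> carrier_mat k nc" "i < nr" "j < nc"
  shows "(A * B) $$ (i,j) = (\<Sum>t<k. A $$ (i,t) * B $$ (t,j))"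
  using assms by (auto simp: scalar_prod_def atLeast0LessThan intro!: sum.cong)

lemma diag_left:
  assumes "X \<in> carrier_mat m k"
  shows "diag_real_mat m d * X = mat m k (\<lambda>(i,j). d i * X $$ (i,j))"
proof (rule eq_matI)
  fix i j assume ij: "i < dim_row (mat m k (\<lambda>(i,j). d i * X $$ (i,j)))" "j < dim_col (mat m k (\<lambda>(i,j). d i * X $$ (i,j)))"
  have "(diag_real_mat m d * X) $$ (i,j) = (\<Sum>t<m. (if i = t then d i else 0) * X $$ (t,j))"
    using ij assms by (subst mult_entry[of _ m m _ k]) (auto simp: diag_real_mat_def)
  also have "\<dots> = (\<Sum>t<m. if i = t then d i * X $$ (i,j) else 0)"
    by (rule sum.cong) auto
  also have "\<dots> = d i * X $$ (i,j)"
    using ij by simp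
  finally show "(diag_real_mat m d * X) $$ (i,j) = mat m k (\<lambda>(i,j). d i * X $$ (i,j)) $$ (i,j)"
    using ij by simp
qed (use assms in \<open>auto simp: diag_real_mat_def\<close>)

lemma diag_right:
  assumes "X \<in> carrier_mat m k"
  shows "X * diag_real_mat k d = mat m k (\<lambda>(i,j). X $$ (i,j) * d j)"
proof (rule eq_matI)
  fix i j assume ij: "i < dim_row (mat m k (\<lambda>(i,j). X $$ (i,j) * d j))" "j < dim_col (mat m k (\<lambda>(i,j). X $$ (i,j) * d j))"
  have "(X * diag_real_mat k d) $$ (i,j) = (\<Sum>t<k. X $$ (i,t) * (if t = j then d t else 0))"
    using ij assms by (subst mult_entry[of _ m k _ k]) (auto simp: diag_real_mat_def)
  also have "\<dots> = (\<Sum>t<k. if t = j then X $$ (i,j) * d j else 0)"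
    by (rule sum.cong) auto
  also have "\<dots> = X $$ (i,j) * d j"
    using ij by simp
  finally show "(X * diag_real_mat k d) $$ (i,j) = mat m k (\<lambda>(i,j). X $$ (i,j) * d j) $$ (i,j)"
    using ij by simp
qed (use assms in \<open>auto simp: diag_real_mat_def\<close>)

lemma diag_carrier[simp]: "diag_real_mat m d \<in> carrier_mat m m"
  by (simp add: diag_real_mat_def)

lemma diag_diag: "diag_real_mat m d * diag_real_mat m e = diag_real_mat m (\<lambda>i. d i * e i)"
  by (subst diag_left[of _ m m]) (auto simp: diag_real_mat_def intro!: eq_matI)

lemma transpose_diag: "transpose_mat (diag_real_mat m d) = diag_real_mat m d"
  by (auto simp: diag_real_mat_def intro!: eq_matI)

lemma pinv_diag:
  assumes "\<forall>a<m. d a \<noteq> 0"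
  shows "pinv (diag_real_mat m d) = diag_real_mat m (\<lambda>a. 1 / d a)"
  unfolding pinv_def
proof (rule the_equality, goal_cases)
  case 1
  have e1: "diag_real_mat m d * diag_real_mat m (\<lambda>a. 1 / d a) = diag_real_mat m (\<lambda>a. 1)"
    unfolding diag_diag using assms by (auto simp: diag_real_mat_def intro!: eq_matI)
  have e2: "diag_real_mat m (\<lambda>a. 1 / d a) * diag_real_mat m d = diag_real_mat m (\<lambda>a. 1)"
    unfolding diag_diag using assms by (auto simp: diag_real_mat_def intro!: eq_matI)
  have e3: "diag_real_mat m (\<lambda>a. 1) * diag_real_mat m d = diag_real_mat m d"
    unfolding diag_diag by simp
  have e4: "diag_real_mat m (\<lambda>a. 1) * diag_real_mat m (\<lambda>a. 1 / d a) = diag_real_mat m (\<lambda>a. 1 / d a)"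
    unfolding diag_diag by simp
  show ?case unfolding e1 e2 e3 e4 transpose_diag by (simp add: diag_real_mat_def)
next
  case (2 X)
  then have X: "X \<in> carrier_mat m m" and eq: "diag_real_mat m d * X * diag_real_mat m d = diag_real_mat m d"
    by (auto simp: diag_real_mat_def)
  have DXD: "diag_real_mat m d * X * diag_real_mat m d = mat m m (\<lambda>(i,j). d i * X $$ (i,j) * d j)"
  proof -
    have "diag_real_mat m d * X = mat m m (\<lambda>(i,j). d i * X $$ (i,j))" using X by (rule diag_left)
    moreover have "mat m m (\<lambda>(i,j). d i * X $$ (i,j)) * diag_real_mat m d
        = mat m m (\<lambda>(i,j). mat m m (\<lambda>(i,j). d i * X $$ (i,j)) $$ (i,j) * d j)"
      by (rule diag_right) simp
    moreover have "mat m m (\<lambda>(i,j). mat m m (\<lambda>(i,j). d i * X $$ (i,j)) $$ (i,j) * d j)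
        = mat m m (\<lambda>(i,j). d i * X $$ (i,j) * d j)"
      by (rule eq_matI) auto
    ultimately show ?thesis by simp
  qed
  have ent: "\<And>i j. i < m \<Longrightarrow> j < m \<Longrightarrow> d i * X $$ (i,j) * d j = (if i = j then d i else 0)"
  proof -
    fix i j assume "i < m" "j < m"
    then have "mat m m (\<lambda>(i,j). d i * X $$ (i,j) * d j) $$ (i,j) = diag_real_mat m d $$ (i,j)"
      using eq DXD by simp
    with \<open>i < m\<close> \<open>j < m\<close> show "d i * X $$ (i,j) * d j = (if i = j then d i else 0)"
      by (simp add: diag_real_mat_def)
  qed
  show ?case
  proof (rule eq_matI)
    fix i j assume ij: "i < dim_row (diag_real_mat m (\<lambda>a. 1 / d a))" "j < dim_col (diag_real_mat m (\<lambda>a. 1 / d a))"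
    then have "i < m" "j < m" by (auto simp: diag_real_mat_def)
    with ent[of i j] assms show "X $$ (i,j) = diag_real_mat m (\<lambda>a. 1 / d a) $$ (i,j)"
      by (auto simp: diag_real_mat_def field_simps split: if_splits)
  qed (use X in \<open>auto simp: diag_real_mat_def\<close>)
qed

lemma proj_diag:
  assumes C: "finite C" "C \<subseteq> {..<n}" and w: "\<forall>i<n. w i > 0"
  shows "proj_sketch (diag_real_mat n w) (I_sub n C) = mat n n (\<lambda>(i,j). if i = j \<and> i \<in> C then 1 else 0)"
proof -
  define l where "l = sorted_list_of_set C"
  define m where "m = card C"
  have dl: "distinct l" and ll: "length l = m" and sl: "set l = C"
    using C(1) by (auto simp: l_def m_def)
  have lC: "a < m \<Longrightarrow> l ! a \<in> C" for a using ll sl nth_mem by blast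
  have ln: "a < m \<Longrightarrow> l ! a < n" for a using lC C(2) by blast
  have dist: "a < m \<Longrightarrow> b < m \<Longrightarrow> (l ! a = l ! b) = (a = b)" for a b
    using dl ll by (simp add: nth_eq_iff_index_eq)
  have Icar: "I_sub n C \<in> carrier_mat n m" by (simp add: I_sub_def m_def)
  have Ient: "i < n \<Longrightarrow> b < m \<Longrightarrow> I_sub n C $$ (i,b) = (if i = l ! b then 1 else 0)" for i b
    by (simp add: I_sub_def l_def m_def)
  have ITcar: "transpose_mat (I_sub n C) \<in> carrier_mat m n" using Icar by auto
  have s1: "transpose_mat (I_sub n C) * diag_real_mat n w = mat m n (\<lambda>(a,k). transpose_mat (I_sub n C) $$ (a,k) * w k)"
    by (rule diag_right[OF ITcar])
  have s2: "transpose_mat (I_sub n C) * diag_real_mat n w * I_sub n C = diag_real_mat m (\<lambda>a. w (l ! a))"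
  proof (rule eq_matI)
    fix a b assume ab: "a < dim_row (diag_real_mat m (\<lambda>a. w (l ! a)))" "b < dim_col (diag_real_mat m (\<lambda>a. w (l ! a)))"
    then have a: "a < m" and b: "b < m" by (auto simp: diag_real_mat_def)
    have "(transpose_mat (I_sub n C) * diag_real_mat n w * I_sub n C) $$ (a,b)
        = (\<Sum>k<n. mat m n (\<lambda>(a,k). transpose_mat (I_sub n C) $$ (a,k) * w k) $$ (a,k) * I_sub n C $$ (k,b))"
      unfolding s1 using a b Icar by (subst mult_entry[of _ m n _ m]) auto
    also have "\<dots> = (\<Sum>k<n. if k = l ! a then w (l ! a) * (if l ! a = l ! b then 1 else 0) else 0)"
      using a b Icar by (intro sum.cong) (auto simp: Ient)
    also have "\<dots> = (if a = b then w (l ! a) else 0)"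
      using ln[OF a] dist[OF a b] by simp
    finally show "(transpose_mat (I_sub n C) * diag_real_mat n w * I_sub n C) $$ (a,b) = diag_real_mat m (\<lambda>a. w (l ! a)) $$ (a,b)"
      using a b by (simp add: diag_real_mat_def)
  qed (use Icar in \<open>auto simp: diag_real_mat_def\<close>)
  have s3: "pinv (transpose_mat (I_sub n C) * diag_real_mat n w * I_sub n C) = diag_real_mat m (\<lambda>a. 1 / w (l ! a))"
    unfolding s2 using w ln by (intro pinv_diag) (metis less_irrefl)
  have s4: "I_sub n C * diag_real_mat m (\<lambda>a. 1 / w (l ! a)) = mat n m (\<lambda>(i,b). I_sub n C $$ (i,b) * (1 / w (l ! b)))"
    by (rule diag_right[OF Icar])
  define Y where "Y = mat n n (\<lambda>(i,j). if i = j \<and> i \<in> C then 1 / w i else 0)"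
  have s5: "mat n m (\<lambda>(i,b). I_sub n C $$ (i,b) * (1 / w (l ! b))) * transpose_mat (I_sub n C) = Y"
  proof (rule eq_matI)
    fix i j assume ij: "i < dim_row Y" "j < dim_col Y"
    then have i: "i < n" and j: "j < n" by (auto simp: Y_def)
    have "(mat n m (\<lambda>(i,b). I_sub n C $$ (i,b) * (1 / w (l ! b))) * transpose_mat (I_sub n C)) $$ (i,j)
       = (\<Sum>b<m. mat n m (\<lambda>(i,b). I_sub n C $$ (i,b) * (1 / w (l ! b))) $$ (i,b) * transpose_mat (I_sub n C) $$ (b,j))"
      using i j ITcar by (subst mult_entry[of _ n m _ n]) auto
    also have "\<dots> = (\<Sum>b<card C. (\<lambda>c. if c = i then (if j = i then 1 / w i else 0) else 0) (sorted_list_of_set C ! b))"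
      using i j Icar by (intro sum.cong) (auto simp: Ient m_def l_def)
    also have "\<dots> = (\<Sum>c\<in>C. if c = i then (if j = i then 1 / w i else 0) else 0)"
      by (rule sum_nth_eq[OF C(1)])
    also have "\<dots> = Y $$ (i,j)"
      using i j C(1) by (auto simp: Y_def)
    finally show "(mat n m (\<lambda>(i,b). I_sub n C $$ (i,b) * (1 / w (l ! b))) * transpose_mat (I_sub n C)) $$ (i,j) = Y $$ (i,j)" .
  qed (use Icar in \<open>auto simp: Y_def\<close>)
  have s6: "Y * diag_real_mat n w = mat n n (\<lambda>(i,j). Y $$ (i,j) * w j)"
    by (rule diag_right) (simp add: Y_def)
  have "proj_sketch (diag_real_mat n w) (I_sub n C) = Y * diag_real_mat n w"
    unfolding proj_sketch_def s3 s4 s5 ..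
  also have "\<dots> = mat n n (\<lambda>(i,j). if i = j \<and> i \<in> C then 1 else 0)"
    unfolding s6 using w by (auto simp: Y_def intro!: eq_matI)
  finally show ?thesis .
qed

lemma scal_mult_entry:
  assumes "v \<in> carrier_vec n" "i < n"
  shows "(mat n n (\<lambda>(i,j). if i = j then c else 0) *\<^sub>v v) $ i = c * v $ i"
proof -
  have "(mat n n (\<lambda>(i,j). if i = j then c else 0) *\<^sub>v v) $ i = (\<Sum>j\<in>{0..<n}. (if i = j then c else 0) * v $ j)"
    using assms by (auto simp: scalar_prod_def intro!: sum.cong)
  also have "\<dots> = (\<Sum>j\<in>{0..<n}. if i = j then c * v $ i else 0)"
    by (rule sum.cong) auto
  also have "\<dots> = c * v $ i" using assms by simp
  finally show ?thesis .
qed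

lemma lambda_min_scal:
  assumes "n > 0"
  shows "lambda_min (mat n n (\<lambda>(i,j). if i = j then c else (0::real))) = c"
proof -
  let ?E = "mat n n (\<lambda>(i,j). if i = j then c else (0::real))"
  have "{k. eigenvalue ?E k} = {c}"
  proof (rule Set.set_eqI, rule iffI)
    fix k assume "k \<in> {k. eigenvalue ?E k}"
    then obtain v where v: "v \<in> carrier_vec n" "v \<noteq> 0\<^sub>v n" "?E *\<^sub>v v = k \<cdot>\<^sub>v v"
      by (auto simp: eigenvalue_def eigenvector_def)
    obtain i where i: "i < n" "v $ i \<noteq> 0"
      using v(1,2) by (metis eq_vecI carrier_vecD index_zero_vec(1,2))
    have "c * v $ i = k * v $ i"
      using scal_mult_entry[OF v(1) i(1), of c] v(1,3) i(1) by (metis carrier_vecD index_smult_vec(1))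
    with i show "k \<in> {c}" by simp
  next
    fix k assume "k \<in> {c}"
    then have k: "k = c" by simp
    let ?v = "vec n (\<lambda>_. 1::real)"
    have "?E *\<^sub>v ?v = k \<cdot>\<^sub>v ?v"
      using k scal_mult_entry[of ?v n _ c] by (intro eq_vecI) auto
    moreover have "?v \<noteq> 0\<^sub>v n"
      using assms by (metis index_vec index_zero_vec(1) zero_neq_one)
    ultimately show "k \<in> {k. eigenvalue ?E k}"
      unfolding eigenvalue_def eigenvector_def by (intro CollectI exI[of _ ?v]) auto
  qed
  then show ?thesis by (simp add: lambda_min_def)
qed

theorem lemma4p8:
  fixes n c1 \<tau> :: nat and S :: "nat set pmf" and w :: "nat \<Rightarrow> real"
  assumes "is_sampling n S"
    and "non_vacuous S"
    and "uniform_support n c1 S" and "c1 \<ge> 1"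
    and "tau_uniform n \<tau> S"
    and "\<forall>i<n. w i > 0"
  shows "real (card (set_pmf S)) / real c1 = real n / real \<tau>
     \<and> stoch_cond_number n (diag_real_mat n w) S = real \<tau> / real n
     \<and> (\<forall>i<n. incl_prob S i = real \<tau> / real n)
     \<and> real \<tau> / real n = real c1 / real (card (set_pmf S))"
proof -
  define P where "P = set_pmf S"
  have Psub: "P \<subseteq> Pow {..<n}" using assms(1) by (simp add: is_sampling_def P_def)
  have finP: "finite P" using Psub finite_subset by blast
  have Csub: "C \<in> P \<Longrightarrow> C \<subseteq> {..<n}" for C using Psub by blast
  have finC: "C \<in> P \<Longrightarrow> finite C" for C using Csub finite_subset by blast
  have cardC: "C \<in> P \<Longrightarrow> card C = \<tau>" for C
    using assms(5) by (simp add: tau_uniform_def AE_measure_pmf_iff P_def)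
  have nemp: "{} \<notin> P" using assms(2) by (simp add: non_vacuous_def P_def set_pmf_iff)
  obtain C0 where C0: "C0 \<in> P" using set_pmf_not_empty[of S] by (auto simp: P_def)
  have tau_pos: "\<tau> > 0" using cardC[OF C0] finC[OF C0] nemp C0 by (metis card_gt_0_iff)
  have n_pos: "n > 0" using Csub[OF C0] nemp C0 by (metis lessThan_0 subset_empty gr0I)
  have cardP_pos: "card P > 0" using finP C0 card_gt_0_iff by blast
  have c1_eq: "i < n \<Longrightarrow> card {C \<in> P. i \<in> C} = c1" for i
    using assms(3) by (simp add: uniform_support_def P_def)
  have cC: "C \<in> P \<Longrightarrow> card C = (\<Sum>i<n. if i \<in> C then 1 else (0::nat))" for C
  proof -
    assume "C \<in> P"
    then have "C = {i \<in> {..<n}. i \<in> C}" using Csub by blast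
    then have "card C = card {i \<in> {..<n}. i \<in> C}" by simp
    also have "\<dots> = (\<Sum>i<n. if i \<in> C then 1 else (0::nat))"
      by (simp add: sum.inter_filter[symmetric])
    finally show ?thesis .
  qed
  have "card P * \<tau> = (\<Sum>C\<in>P. card C)" using cardC by simp
  also have "\<dots> = (\<Sum>C\<in>P. \<Sum>i<n. if i \<in> C then 1 else (0::nat))"
    using cC by (intro sum.cong) auto
  also have "\<dots> = (\<Sum>i<n. \<Sum>C\<in>P. if i \<in> C then 1 else (0::nat))"
    by (rule sum.swap)
  also have "\<dots> = (\<Sum>i<n. card {C \<in> P. i \<in> C})"
    using finP by (intro sum.cong) (auto simp: sum.inter_filter[symmetric])
  also have "\<dots> = n * c1" using c1_eq by simp
  finally have count: "card P * \<tau> = n * c1" .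
  have pi: "incl_prob S i = (\<Sum>C\<in>P. if i \<in> C then pmf S C else 0)" for i
    using incl_prob_sum finP by (simp add: P_def)
  have "(\<Sum>i<n. incl_prob S i) = (\<Sum>i<n. \<Sum>C\<in>P. pmf S C * (if i \<in> C then 1 else 0))"
    unfolding pi by (intro sum.cong refl) auto
  also have "\<dots> = (\<Sum>C\<in>P. pmf S C * real (\<Sum>i<n. if i \<in> C then 1 else (0::nat)))"
    by (subst sum.swap) (simp add: sum_distrib_left of_nat_sum if_distrib cong: if_cong)
  also have "\<dots> = (\<Sum>C\<in>P. pmf S C * real \<tau>)"
    using cC cardC by (intro sum.cong) auto
  also have "\<dots> = real \<tau>"
    using sum_pmf_eq_1[OF finP, of S] by (simp add: P_def sum_distrib_right[symmetric])
  finally have sump: "(\<Sum>i<n. incl_prob S i) = real \<tau>" .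
  have eqp: "i < n \<Longrightarrow> incl_prob S i = incl_prob S 0" for i
    using assms(5) n_pos unfolding tau_uniform_def by blast
  have "(\<Sum>i<n. incl_prob S i) = (\<Sum>i<n. incl_prob S 0)"
    by (rule sum.cong) (rule refl, metis eqp lessThan_iff)
  also have "\<dots> = real n * incl_prob S 0" by simp
  finally have "(\<Sum>i<n. incl_prob S i) = real n * incl_prob S 0" .
  with sump n_pos have p0: "incl_prob S 0 = real \<tau> / real n"
    by (simp add: field_simps)
  have pall: "\<forall>i<n. incl_prob S i = real \<tau> / real n" using eqp p0 by metis
  have E: "expect_mat n S (\<lambda>C. proj_sketch (diag_real_mat n w) (I_sub n C))
      = mat n n (\<lambda>(i,j). if i = j then real \<tau> / real n else 0)"
  proof (rule eq_matI)
    fix i j assume ij: "i < dim_row (mat n n (\<lambda>(i,j). if i = j then real \<tau> / real n else (0::real)))"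
      "j < dim_col (mat n n (\<lambda>(i,j). if i = j then real \<tau> / real n else (0::real)))"
    then have i: "i < n" and j: "j < n" by auto
    have "expect_mat n S (\<lambda>C. proj_sketch (diag_real_mat n w) (I_sub n C)) $$ (i,j)
        = (\<Sum>C\<in>P. pmf S C * (if i = j \<and> i \<in> C then 1 else 0))"
      using i j finC Csub assms(6) by (auto simp: expect_mat_def P_def proj_diag intro!: sum.cong)
    also have "\<dots> = (if i = j then incl_prob S i else 0)"
      unfolding pi by (auto intro!: sum.cong)
    also have "\<dots> = mat n n (\<lambda>(i,j). if i = j then real \<tau> / real n else (0::real)) $$ (i,j)"
      using i j pall by simp
    finally show "expect_mat n S (\<lambda>C. proj_sketch (diag_real_mat n w) (I_sub n C)) $$ (i,j)
        = mat n n (\<lambda>(i,j). if i = j then real \<tau> / real n else (0::real)) $$ (i,j)" .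
  qed (auto simp: expect_mat_def)
  have kappa: "stoch_cond_number n (diag_real_mat n w) S = real \<tau> / real n"
    unfolding stoch_cond_number_def E using lambda_min_scal[OF n_pos] .
  have r1: "real (card P) / real c1 = real n / real \<tau>"
    using count tau_pos assms(4) by (simp add: field_simps flip: of_nat_mult)
  have r2: "real \<tau> / real n = real c1 / real (card P)"
    using count n_pos cardP_pos by (simp add: field_simps flip: of_nat_mult)
  show ?thesis using r1 r2 kappa pall by (simp add: P_def)
qed

end
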